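(* Let $X$ be an idempotent Frobenius semiring and $n\ge1$. Then for every $j$ with $1\le j\le n$ and all $d_1\ge d_2\ge\dots\ge d_j$ in $\mathbb{N}$, $$\mathrm{Sym}_n(x_1^{d_1}\cdots x_j^{d_j})=e_j^{d_j}\cdot\mathrm{Sym}_n\big(x_1^{d_1-d_j}\cdots x_{j-1}^{d_{j-1}-d_j}\big)$$ as functions $X^n\to X$.
   Context: A semiring $(X,+,0,\cdot)$: $(X,+,0)$ commutative monoid, $(X,\cdot)$ semigroup, distributivity, $0$ absorbing. Idempotent: $x+x=x$. A Frobenius semiring is a unital commutative semiring with $(x+y)^n=x^n+y^n$ for all $x,y$, $n\ge1$. For a polynomial $p:X^n\to X$, $\mathrm{Sym}_n(p)(x_1,\dots,x_n)=\sum_{\sigma\in S_n}p(x_{\sigma(1)},\dots,x_{\sigma(n)})$; monomials in $x_1,\dots,x_j$ are regarded as functions of all $n$ variables. $e_j(x_1,\dots,x_n)$ is the sum of all products of $j$ distinct variables among $x_1,\dots,x_n$. *)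

theory Defs
  imports "HOL-Combinatorics.Permutations"
begin

text \<open>Variables x_1..x_n are modelled by a function x :: nat => 'a, using indices 1..n.\<close>

definition idempotent_frobenius :: "'a::{comm_semiring_0, comm_monoid_mult} itself \<Rightarrow> bool" where
  "idempotent_frobenius _ \<longleftrightarrow>
     (\<forall>x::'a. x + x = x) \<and> (\<forall>(x::'a) y. \<forall>m::nat. m \<ge> 1 \<longrightarrow> (x + y) ^ m = x ^ m + y ^ m)"

definition Sym :: "nat \<Rightarrow> ((nat \<Rightarrow> 'a) \<Rightarrow> 'a) \<Rightarrow> (nat \<Rightarrow> 'a) \<Rightarrow> 'a::comm_monoid_add" where
  "Sym n p x = (\<Sum>\<sigma>\<in>{\<sigma>. \<sigma> permutes {1..n}}. p (x \<circ> \<sigma>))"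

definition elem_sym :: "nat \<Rightarrow> nat \<Rightarrow> (nat \<Rightarrow> 'a) \<Rightarrow> 'a::{comm_monoid_add, comm_monoid_mult}" where
  "elem_sym n j x = (\<Sum>S\<in>{S. S \<subseteq> {1..n} \<and> card S = j}. \<Prod>i\<in>S. x i)"

end

theory Submission
  imports Defs
begin

lemma my_prod_power: "(\<Prod>i\<in>A. (f i::'a::comm_monoid_mult))^m = (\<Prod>i\<in>A. f i ^ m)"
  by (induction A rule: infinite_finite_induct) (auto simp: power_mult_distrib)

lemma sum_bound:
  fixes f :: "'b \<Rightarrow> 'a::comm_monoid_add"
  shows "finite A \<Longrightarrow> (\<And>a. a\<in>A \<Longrightarrow> f a + L = L) \<Longrightarrow> sum f A + L = L"
  by (induction A rule: finite_induct) (auto simp: add.assoc)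

lemma term_le:
  fixes f :: "'b \<Rightarrow> 'a::comm_monoid_add"
  assumes idem: "\<And>x::'a. x + x = x" and "finite A" "a \<in> A"
  shows "f a + sum f A = sum f A"
proof -
  have "sum f A = f a + sum f (A - {a})" using assms by (simp add: sum.remove)
  then show ?thesis by (metis add.assoc idem)
qed

lemma le_trans':
  fixes u :: "'a::comm_monoid_add"
  shows "u + v = v \<Longrightarrow> v + w = w \<Longrightarrow> u + w = w"
  by (metis add.assoc)

lemma pow_le:
  fixes a b :: "'a::{comm_semiring_0,comm_monoid_mult}"
  assumes idem: "\<And>x::'a. x + x = x"
  shows "p \<le> m \<Longrightarrow> a^p * b^(m-p) + (a+b)^m = (a+b)^m"
proof (induction m arbitrary: p)
  case 0
  then show ?case using idem by simp
next
  case (Suc m)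
  let ?X = "(a+b)^m"
  have eq: "(a+b)^Suc m = ?X * a + ?X * b" by (simp only: power_Suc2 distrib_left)
  show ?case
  proof (cases p)
    case 0
    have "b^m + ?X = ?X" using Suc.IH[of 0] by simp
    then have "b^m * b + ?X * b = ?X * b" by (metis distrib_right)
    then have "b^m * b + (?X * a + ?X * b) = ?X * a + ?X * b" by (metis add.assoc add.commute)
    then show ?thesis using 0 eq by (simp add: mult.commute)
  next
    case (Suc p')
    with Suc.prems have "p' \<le> m" by simp
    then have "a^p' * b^(m-p') + ?X = ?X" using Suc.IH by simp
    then have "a^p' * b^(m-p') * a + ?X * a = ?X * a" by (metis distrib_right)
    then have h: "a^p' * b^(m-p') * a + (?X * a + ?X * b) = ?X * a + ?X * b" by (metis add.assoc)
    have "a^p * b^(Suc m - p) = a^p' * b^(m-p') * a" using Suc by (simp add: power_Suc2 ac_simps)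
    then show ?thesis using h eq by simp
  qed
qed

lemma key:
  fixes a b :: "'a::{comm_semiring_0,comm_monoid_mult}"
  assumes idem: "\<And>x::'a. x + x = x"
    and frob: "\<And>x y::'a. \<And>m::nat. m \<ge> 1 \<Longrightarrow> (x + y) ^ m = x ^ m + y ^ m"
  shows "a^p * b^q + (a^(p+q) + b^(p+q)) = a^(p+q) + b^(p+q)"
proof (cases "p + q = 0")
  case True
  then show ?thesis using idem by simp
next
  case False
  have "a^p * b^(p+q-p) + (a+b)^(p+q) = (a+b)^(p+q)" by (rule pow_le[OF idem]) simp
  then show ?thesis using frob[of "p+q" a b] False by simp
qed

lemma frob_sum:
  fixes f :: "'b \<Rightarrow> 'a::{comm_semiring_0,comm_monoid_mult}"
  assumes frob: "\<And>x y::'a. \<And>m::nat. m \<ge> 1 \<Longrightarrow> (x + y) ^ m = x ^ m + y ^ m"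
    and m: "m \<ge> 1"
  shows "(sum f A)^m = (\<Sum>a\<in>A. f a ^ m)"
proof -
  obtain k where k: "m = Suc k" using m by (cases m) auto
  show ?thesis
  proof (induction A rule: infinite_finite_induct)
    case (infinite A)
    then show ?case by (simp add: k)
  next
    case empty
    then show ?case by (simp add: k)
  next
    case (insert x F)
    then show ?case by (simp add: frob[OF m])
  qed
qed

lemma mono_d:
  assumes "\<forall>i. 1 \<le> i \<and> i < j \<longrightarrow> d (i + 1) \<le> d (i::nat)" "1 \<le> i" "i \<le> k" "k \<le> j"
  shows "d k \<le> (d i::nat)"
  using assms(3,4)
proof (induction k rule: dec_induct)
  case base
  then show ?case by simp
next
  case (step k)
  then have "d (k+1) \<le> d k" using assms(1,2) by auto
  then show ?case using step by simp
qed

lemma claimB0: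
  fixes x :: "nat \<Rightarrow> 'a::{comm_semiring_0,comm_monoid_mult}"
  assumes j: "1 \<le> j" "j \<le> n" and dc: "\<And>i. i \<in> {1..j-1} \<Longrightarrow> d i = e + c i" "d j = e"
    and S: "S \<subseteq> {1..n}" "card S = j" and \<sigma>: "\<sigma> permutes {1..n}" and sub: "\<sigma>`{1..j-1} \<subseteq> S"
  shows "\<exists>\<pi>. \<pi> permutes {1..n} \<and> (\<Prod>i\<in>S. x i ^ e) * (\<Prod>i=1..j-1. x (\<sigma> i) ^ c i) = (\<Prod>i=1..j. x (\<pi> i) ^ d i)"
proof -
  define B where "B = \<sigma>`{1..j-1}"
  have inj: "inj_on \<sigma> {1..j-1}" using \<sigma> permutes_inj_on by blast
  have cB: "card B = j - 1" unfolding B_def using inj by (simp add: card_image)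
  have fS: "finite S" using S finite_subset by blast
  have "card (S - B) = card S - card B" using sub unfolding B_def by (intro card_Diff_subset) auto
  then have "card (S - B) = 1" using cB S(2) j(1) by simp
  then obtain a where a: "S - B = {a}" by (rule card_1_singletonE)
  have aS: "a \<in> S" and aB: "a \<notin> B" using a by auto
  have an: "a \<in> {1..n}" using aS S by auto
  define b where "b = \<sigma> j"
  have bn: "b \<in> {1..n}" unfolding b_def using permutes_in_image[OF \<sigma>] j by auto
  define \<pi> where "\<pi> = Transposition.transpose a b \<circ> \<sigma>"
  have \<pi>p: "\<pi> permutes {1..n}" unfolding \<pi>_def by (rule permutes_compose[OF \<sigma> permutes_swap_id[OF an bn]])
  have \<pi>i: "\<pi> i = \<sigma> i" if "i \<in> {1..j-1}" for i
  proof -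
    have "\<sigma> i \<noteq> a" using aB that unfolding B_def by auto
    moreover have "\<sigma> i \<noteq> b"
    proof
      assume "\<sigma> i = b"
      then have "i = j" unfolding b_def using injD[OF permutes_inj[OF \<sigma>]] by blast
      then show False using that j by simp
    qed
    ultimately show ?thesis unfolding \<pi>_def by (simp add: transpose_apply_other)
  qed
  have \<pi>j: "\<pi> j = a" unfolding \<pi>_def b_def by simp
  have subB: "B \<subseteq> S" using sub unfolding B_def .
  have Sins: "S = insert a B" using a subB by blast
  have fB: "finite B" unfolding B_def by simp
  have ij: "{1..j} = insert j {1..j-1}" using j by auto
  have "(\<Prod>i=1..j. x (\<pi> i) ^ d i) = x a ^ e * (\<Prod>i=1..j-1. x (\<pi> i) ^ d i)"
    using ij \<pi>j dc(2) j by simp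
  also have "(\<Prod>i=1..j-1. x (\<pi> i) ^ d i) = (\<Prod>i=1..j-1. x (\<sigma> i) ^ e * x (\<sigma> i) ^ c i)"
    by (rule prod.cong) (auto simp: \<pi>i dc(1) power_add)
  also have "\<dots> = (\<Prod>i=1..j-1. x (\<sigma> i) ^ e) * (\<Prod>i=1..j-1. x (\<sigma> i) ^ c i)"
    by (rule prod.distrib)
  also have "(\<Prod>i=1..j-1. x (\<sigma> i) ^ e) = (\<Prod>i\<in>B. x i ^ e)"
    unfolding B_def using prod.reindex[OF inj, of "\<lambda>i. x i ^ e"] by simp
  finally have eqp: "(\<Prod>i=1..j. x (\<pi> i) ^ d i) = x a ^ e * ((\<Prod>i\<in>B. x i ^ e) * (\<Prod>i=1..j-1. x (\<sigma> i) ^ c i))" .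
  have PS: "(\<Prod>i\<in>S. x i ^ e) = x a ^ e * (\<Prod>i\<in>B. x i ^ e)" using Sins aB fB by simp
  have "(\<Prod>i\<in>S. x i ^ e) * (\<Prod>i=1..j-1. x (\<sigma> i) ^ c i) = (\<Prod>i=1..j. x (\<pi> i) ^ d i)"
    unfolding eqp PS by (simp only: mult.assoc)
  then show ?thesis using \<pi>p by blast
qed


lemma claimB:
  fixes x :: "nat \<Rightarrow> 'a::{comm_semiring_0,comm_monoid_mult}"
  assumes idem: "\<And>x::'a. x + x = x"
    and frob: "\<And>x y::'a. \<And>m::nat. m \<ge> 1 \<Longrightarrow> (x + y) ^ m = x ^ m + y ^ m"
    and j: "1 \<le> j" "j \<le> n" and dc: "\<And>i. i \<in> {1..j-1} \<Longrightarrow> d i = e + c i" "d j = e"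
  shows "card (\<sigma>`{1..j-1} - S) = k \<Longrightarrow> S \<subseteq> {1..n} \<Longrightarrow> card S = j \<Longrightarrow> \<sigma> permutes {1..n} \<Longrightarrow>
    (\<Prod>i\<in>S. x i ^ e) * (\<Prod>i=1..j-1. x (\<sigma> i) ^ c i)
     + (\<Sum>\<pi>\<in>{\<pi>. \<pi> permutes {1..n}}. \<Prod>i=1..j. x (\<pi> i) ^ d i)
     = (\<Sum>\<pi>\<in>{\<pi>. \<pi> permutes {1..n}}. \<Prod>i=1..j. x (\<pi> i) ^ d i)"
proof (induction k arbitrary: S \<sigma>)
  case 0
  have fin: "finite {\<pi>. \<pi> permutes {1..n}}" by (rule finite_permutations) simp
  have sub: "\<sigma>`{1..j-1} \<subseteq> S" using 0 by (simp add: card_eq_0_iff)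
  have "\<exists>\<pi>. \<pi> permutes {1..n} \<and> (\<Prod>i\<in>S. x i ^ e) * (\<Prod>i=1..j-1. x (\<sigma> i) ^ c i) = (\<Prod>i=1..j. x (\<pi> i) ^ d i)"
    by (rule claimB0[where d=d and c=c and e=e and j=j and n=n, OF j(1) j(2) dc(1) dc(2) 0(2) 0(3) 0(4) sub])
  then obtain \<pi> where "\<pi> permutes {1..n}" and eq: "(\<Prod>i\<in>S. x i ^ e) * (\<Prod>i=1..j-1. x (\<sigma> i) ^ c i) = (\<Prod>i=1..j. x (\<pi> i) ^ d i)"
    by blast
  then show ?case using term_le[OF idem fin, of \<pi> "\<lambda>\<pi>. \<Prod>i=1..j. x (\<pi> i) ^ d i"] by simp
next
  case (Suc k)
  note S = Suc.prems(2,3) and \<sigma> = Suc.prems(4)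
  define L where "L = (\<Sum>\<pi>\<in>{\<pi>. \<pi> permutes {1..n}}. \<Prod>i=1..j. x (\<pi> i) ^ d i)"
  define B where "B = \<sigma>`{1..j-1}"
  have inj: "inj_on \<sigma> {1..j-1}" by (rule permutes_inj_on[OF \<sigma>])
  have cB: "card B = j - 1" unfolding B_def using inj by (simp add: card_image)
  have fS: "finite S" by (rule finite_subset[OF S(1)]) simp
  have fB: "finite B" unfolding B_def by simp
  have Bn: "B \<subseteq> {1..n}"
  proof
    fix y assume "y \<in> B"
    then obtain i where i: "i \<in> {1..j-1}" "y = \<sigma> i" unfolding B_def by blast
    then have "i \<in> {1..n}" using j by auto
    then show "y \<in> {1..n}" using permutes_in_image[OF \<sigma>, of i] i(2) by simp
  qed
  have cBS: "card (B - S) = Suc k" unfolding B_def by (rule Suc.prems(1))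
  then have "B - S \<noteq> {}" by (intro notI) simp
  then obtain b where bBS: "b \<in> B - S" by blast
  then obtain k0 where k0: "k0 \<in> {1..j-1}" and bk: "b = \<sigma> k0" unfolding B_def by blast
  have "\<not> S \<subseteq> B"
  proof
    assume "S \<subseteq> B"
    then have "card S \<le> card B" using fB by (rule card_mono[rotated])
    then show False using cB S(2) j(1) by simp
  qed
  then obtain a where aS: "a \<in> S" and aB: "a \<notin> B" by blast
  have an: "a \<in> {1..n}" using aS S by auto
  have bn: "b \<in> {1..n}" using bBS Bn by auto
  have ab: "a \<noteq> b" using aB bBS by auto
  define S' where "S' = insert b (S - {a})"
  have S'n: "S' \<subseteq> {1..n}" unfolding S'_def using S bn by auto
  have cS': "card S' = j" unfolding S'_def using fS aS bBS S j by (simp add: card.insert_remove)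
  have "B - S' = (B - S) - {b}" unfolding S'_def using aB by auto
  then have m1: "card (\<sigma>`{1..j-1} - S') = k" using cBS bBS fB unfolding B_def[symmetric] by simp
  define \<tau> where "\<tau> = Transposition.transpose a b \<circ> \<sigma>"
  have \<tau>p: "\<tau> permutes {1..n}" unfolding \<tau>_def by (rule permutes_compose[OF \<sigma> permutes_swap_id[OF an bn]])
  have \<tau>i: "\<tau> i = \<sigma> i" if "i \<in> {1..j-1}" "i \<noteq> k0" for i
  proof -
    have "\<sigma> i \<noteq> a" using aB that unfolding B_def by auto
    moreover have "\<sigma> i \<noteq> b"
    proof
      assume "\<sigma> i = b"
      then have "i = k0" unfolding bk using inj_onD[OF inj] that k0 by blast
      then show False using that by simp
    qed
    ultimately show ?thesis unfolding \<tau>_def by (simp add: transpose_apply_other)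
  qed
  have \<tau>k0: "\<tau> k0 = a" unfolding \<tau>_def bk by simp
  have "\<tau>`{1..j-1} = insert a (B - {b})"
  proof -
    have "\<tau>`({1..j-1} - {k0}) = \<sigma>`({1..j-1} - {k0})" using \<tau>i by (intro image_cong) auto
    also have "\<dots> = B - {b}" unfolding B_def bk using inj k0 by (simp add: inj_on_image_set_diff)
    finally have "\<tau>`({1..j-1} - {k0}) = B - {b}" .
    moreover have "\<tau>`{1..j-1} = insert (\<tau> k0) (\<tau>`({1..j-1} - {k0}))" using k0 by blast
    ultimately show ?thesis using \<tau>k0 by simp
  qed
  then have "\<tau>`{1..j-1} - S = (B - S) - {b}" using aS by auto
  then have m2: "card (\<tau>`{1..j-1} - S) = k" using cBS bBS fB by simp
  have IH1: "(\<Prod>i\<in>S'. x i ^ e) * (\<Prod>i=1..j-1. x (\<sigma> i) ^ c i) + L = L"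
    unfolding L_def using Suc.IH[OF m1 S'n cS' \<sigma>] .
  have IH2: "(\<Prod>i\<in>S. x i ^ e) * (\<Prod>i=1..j-1. x (\<tau> i) ^ c i) + L = L"
    unfolding L_def using Suc.IH[OF m2 S \<tau>p] .
  define R1 where "R1 = (\<Prod>i\<in>S - {a}. x i ^ e)"
  define R2 where "R2 = (\<Prod>i\<in>{1..j-1} - {k0}. x (\<sigma> i) ^ c i)"
  have fJ: "finite {1..j-1}" by simp
  have p1: "(\<Prod>i\<in>S. x i ^ e) = x a ^ e * R1" unfolding R1_def by (rule prod.remove[OF fS aS])
  have p2: "(\<Prod>i=1..j-1. x (\<sigma> i) ^ c i) = x b ^ c k0 * R2" unfolding R2_def bk by (rule prod.remove[OF fJ k0])
  have t0: "(\<Prod>i\<in>S. x i ^ e) * (\<Prod>i=1..j-1. x (\<sigma> i) ^ c i) = (R1 * R2) * (x a ^ e * x b ^ c k0)"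
    unfolding p1 p2 by (simp add: ac_simps)
  have t1: "(\<Prod>i\<in>S'. x i ^ e) * (\<Prod>i=1..j-1. x (\<sigma> i) ^ c i) = (R1 * R2) * x b ^ (e + c k0)"
  proof -
    have "(\<Prod>i\<in>S'. x i ^ e) = x b ^ e * R1" unfolding S'_def R1_def using fS bBS by simp
    then show ?thesis unfolding p2 by (simp add: ac_simps power_add)
  qed
  have t2: "(\<Prod>i\<in>S. x i ^ e) * (\<Prod>i=1..j-1. x (\<tau> i) ^ c i) = (R1 * R2) * x a ^ (e + c k0)"
  proof -
    have "(\<Prod>i\<in>{1..j-1} - {k0}. x (\<tau> i) ^ c i) = R2" unfolding R2_def
      by (rule prod.cong) (auto simp: \<tau>i)
    then have "(\<Prod>i=1..j-1. x (\<tau> i) ^ c i) = x a ^ c k0 * R2" using prod.remove[OF fJ k0, of "\<lambda>i. x (\<tau> i) ^ c i"] \<tau>k0 by simp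
    then show ?thesis unfolding p1 by (simp add: ac_simps power_add)
  qed
  have kk: "x a ^ e * x b ^ c k0 + (x a ^ (e + c k0) + x b ^ (e + c k0)) = x a ^ (e + c k0) + x b ^ (e + c k0)"
    by (rule key[OF idem frob])
  have "(R1 * R2) * (x a ^ e * x b ^ c k0) + ((R1 * R2) * x a ^ (e + c k0) + (R1 * R2) * x b ^ (e + c k0))
     = (R1 * R2) * x a ^ (e + c k0) + (R1 * R2) * x b ^ (e + c k0)"
  proof -
    have "(R1 * R2) * (x a ^ e * x b ^ c k0 + (x a ^ (e + c k0) + x b ^ (e + c k0))) = (R1 * R2) * (x a ^ (e + c k0) + x b ^ (e + c k0))"
      using kk by (rule arg_cong)
    then show ?thesis by (simp only: distrib_left)
  qed
  moreover have "(R1 * R2) * x a ^ (e + c k0) + (R1 * R2) * x b ^ (e + c k0) + L = L"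
  proof -
    have h1: "(R1 * R2) * x b ^ (e + c k0) + L = L" using IH1 t1 by simp
    have h2: "(R1 * R2) * x a ^ (e + c k0) + L = L" using IH2 t2 by simp
    show ?thesis using h1 h2 by (simp add: add.assoc)
  qed
  ultimately show ?case unfolding L_def[symmetric] t0 by (rule le_trans')
qed


theorem lemma4p4:
  fixes n j :: nat and d :: "nat \<Rightarrow> nat"
  assumes "idempotent_frobenius TYPE('a::{comm_semiring_0, comm_monoid_mult})"
    and "n \<ge> 1" and "1 \<le> j" and "j \<le> n"
    and "\<forall>i. 1 \<le> i \<and> i < j \<longrightarrow> d (i + 1) \<le> d i"
  shows "Sym n (\<lambda>y::nat \<Rightarrow> 'a. \<Prod>i=1..j. y i ^ d i)
       = (\<lambda>x. elem_sym n j x ^ d j * Sym n (\<lambda>y. \<Prod>i=1..j-1. y i ^ (d i - d j)) x)"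
proof -
  have idem: "\<And>x::'a. x + x = x" using assms(1) unfolding idempotent_frobenius_def by blast
  have frob: "\<And>x y::'a. \<And>m::nat. m \<ge> 1 \<Longrightarrow> (x + y) ^ m = x ^ m + y ^ m"
    using assms(1) unfolding idempotent_frobenius_def by blast
  have j: "1 \<le> j" "j \<le> n" using assms by auto
  define e where "e = d j"
  define c where "c i = d i - e" for i
  have dci: "d i = e + c i" if "i \<in> {1..j}" for i
  proof -
    have "d j \<le> d i" using mono_d[OF assms(5), of i j] that by auto
    then show ?thesis unfolding c_def e_def by simp
  qed
  have dc1: "\<And>i. i \<in> {1..j-1} \<Longrightarrow> d i = e + c i" using dci by auto
  have dc2: "d j = e" unfolding e_def ..
  have cj: "c j = 0" unfolding c_def e_def by simp
  have ij: "{1..j} = insert j {1..j-1}" using j by auto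
  show ?thesis
  proof (rule ext)
    fix x :: "nat \<Rightarrow> 'a"
    define P where "P = {\<pi>. \<pi> permutes {1..n}}"
    define SS where "SS = {S. S \<subseteq> {1..n} \<and> card S = j}"
    have finP: "finite P" unfolding P_def by (rule finite_permutations) simp
    have finSS: "finite SS" unfolding SS_def by (rule finite_subset[of _ "Pow {1..n}"]) auto
    define LHS where "LHS = (\<Sum>\<pi>\<in>P. \<Prod>i=1..j. x (\<pi> i) ^ d i)"
    have L: "Sym n (\<lambda>y::nat \<Rightarrow> 'a. \<Prod>i=1..j. y i ^ d i) x = LHS"
      unfolding Sym_def LHS_def P_def by simp
    have R: "Sym n (\<lambda>y. \<Prod>i=1..j-1. y i ^ (d i - d j)) x = (\<Sum>\<sigma>\<in>P. \<Prod>i=1..j-1. x (\<sigma> i) ^ c i)"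
      unfolding Sym_def P_def c_def e_def by simp
    show "Sym n (\<lambda>y::nat \<Rightarrow> 'a. \<Prod>i=1..j. y i ^ d i) x
       = elem_sym n j x ^ d j * Sym n (\<lambda>y. \<Prod>i=1..j-1. y i ^ (d i - d j)) x"
    proof (cases "e = 0")
      case True
      have "(\<Prod>i=1..j. x (\<pi> i) ^ d i) = (\<Prod>i=1..j-1. x (\<pi> i) ^ c i)" for \<pi>
      proof -
        have "(\<Prod>i=1..j. x (\<pi> i) ^ d i) = (\<Prod>i=1..j. x (\<pi> i) ^ c i)"
          by (rule prod.cong) (auto simp: dci True)
        also have "\<dots> = (\<Prod>i=1..j-1. x (\<pi> i) ^ c i)" using ij cj j by simp
        finally show ?thesis .
      qed
      then show ?thesis unfolding L R LHS_def using True dc2 by simp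
    next
      case False
      then have e1: "e \<ge> 1" by simp
      define T where "T S \<sigma> = (\<Prod>i\<in>S. x i ^ e) * (\<Prod>i=1..j-1. x (\<sigma> i) ^ c i)" for S \<sigma>
      have E: "elem_sym n j x ^ e = (\<Sum>S\<in>SS. \<Prod>i\<in>S. x i ^ e)"
        unfolding elem_sym_def SS_def[symmetric] by (simp add: frob_sum[OF frob e1] my_prod_power)
      define RHS where "RHS = (\<Sum>p\<in>SS \<times> P. T (fst p) (snd p))"
      have Req: "elem_sym n j x ^ d j * Sym n (\<lambda>y. \<Prod>i=1..j-1. y i ^ (d i - d j)) x = RHS"
        unfolding R unfolding dc2 E RHS_def T_def sum_product sum.cartesian_product by (simp add: case_prod_beta)
      have le1: "RHS + LHS = LHS"
        unfolding RHS_def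
      proof (rule sum_bound)
        show "finite (SS \<times> P)" using finSS finP by simp
      next
        fix p assume p: "p \<in> SS \<times> P"
        have p1: "fst p \<subseteq> {1..n}" and p2: "card (fst p) = j" and p3: "snd p permutes {1..n}"
          using p unfolding SS_def P_def by auto
        show "T (fst p) (snd p) + LHS = LHS"
          unfolding T_def LHS_def P_def
          by (rule claimB[where d=d and c=c and e=e and j=j and n=n, OF idem frob j(1) j(2) dc1 dc2 refl p1 p2 p3])
      qed
      have le2: "LHS + RHS = RHS"
        unfolding LHS_def
      proof (rule sum_bound[OF finP])
        fix \<pi> assume \<pi>: "\<pi> \<in> P"
        then have \<pi>p: "\<pi> permutes {1..n}" unfolding P_def by simp
        have inj: "inj_on \<pi> {1..j}" by (rule permutes_inj_on[OF \<pi>p])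
        have sub: "\<pi>`{1..j} \<subseteq> {1..n}"
        proof
          fix y assume "y \<in> \<pi>`{1..j}"
          then obtain i where i: "i \<in> {1..j}" "y = \<pi> i" by blast
          then have "i \<in> {1..n}" using j by auto
          then show "y \<in> {1..n}" using permutes_in_image[OF \<pi>p, of i] i(2) by simp
        qed
        have mem: "(\<pi>`{1..j}, \<pi>) \<in> SS \<times> P" unfolding SS_def using sub inj \<pi> by (simp add: card_image)
        have "(\<Prod>i=1..j. x (\<pi> i) ^ d i) = (\<Prod>i=1..j. x (\<pi> i) ^ e * x (\<pi> i) ^ c i)"
          by (rule prod.cong) (auto simp: dci power_add)
        also have "\<dots> = (\<Prod>i=1..j. x (\<pi> i) ^ e) * (\<Prod>i=1..j. x (\<pi> i) ^ c i)" by (rule prod.distrib)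
        also have "(\<Prod>i=1..j. x (\<pi> i) ^ e) = (\<Prod>i\<in>\<pi>`{1..j}. x i ^ e)"
          using prod.reindex[OF inj, of "\<lambda>i. x i ^ e"] by simp
        also have "(\<Prod>i=1..j. x (\<pi> i) ^ c i) = (\<Prod>i=1..j-1. x (\<pi> i) ^ c i)" using ij cj j by simp
        finally have "(\<Prod>i=1..j. x (\<pi> i) ^ d i) = T (\<pi>`{1..j}) \<pi>" unfolding T_def .
        then show "(\<Prod>i=1..j. x (\<pi> i) ^ d i) + RHS = RHS"
          unfolding RHS_def using term_le[OF idem _ mem, of "\<lambda>p. T (fst p) (snd p)"] finSS finP by simp
      qed
      have "LHS = RHS" using le1 le2 by (metis add.commute)
      then show ?thesis unfolding L Req .
    qed
  qed
qed

end
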